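(* Let $D$ be an integral domain of characteristic zero. Suppose that every $D$-algebra endomorphism of $A_1(D)$ is an automorphism of $A_1(D)$. Then for all $A,B,w\in A_1(D)$ with $[A,B]\in D^*$ and $[A,w]=0$, one has $w\in D[A]$.
   Context: For a commutative ring $R$, the first Weyl algebra $A_1(R)$ is the unital associative $R$-algebra generated by $X,Y$ subject to $[Y,X]=YX-XY=1$; it is a free $R$-module with basis $\{X^iY^j\}_{i,j\ge0}$. $[P,Q]=PQ-QP$. $D^*$ is the group of units of $D$. $D[A]$ denotes the $D$-subalgebra of $A_1(D)$ generated by $A$. *)

theory Defs
  imports Main "HOL-Library.Poly_Mapping"
begin

text \<open>Elements of the first Weyl algebra A_1(D): finitely supported coefficient
  families indexed by (i,j), representing sum of c_(i,j) X^i Y^j (normal ordered basis).\<close>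
type_synonym 'a weyl = "(nat \<times> nat) \<Rightarrow>\<^sub>0 'a"

text \<open>Multiplication, determined by YX = XY + 1:
  X^i Y^j * X^k Y^l = sum_t t! (j choose t) (k choose t) X^(i+k-t) Y^(j+l-t).\<close>
definition weyl_mult :: "'a::comm_ring_1 weyl \<Rightarrow> 'a weyl \<Rightarrow> 'a weyl" where
  "weyl_mult p q =
     (\<Sum>m\<in>Poly_Mapping.keys p. \<Sum>n\<in>Poly_Mapping.keys q. \<Sum>t\<le>min (snd m) (fst n).
        Poly_Mapping.single (fst m + fst n - t, snd m + snd n - t)
          (Poly_Mapping.lookup p m * Poly_Mapping.lookup q n * of_nat (fact t * (snd m choose t) * (fst n choose t))))"

definition weyl_const :: "'a::comm_ring_1 \<Rightarrow> 'a weyl" where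
  "weyl_const c = Poly_Mapping.single (0, 0) c"

definition weyl_X :: "'a::comm_ring_1 weyl" where
  "weyl_X = Poly_Mapping.single (1, 0) 1"

definition weyl_Y :: "'a::comm_ring_1 weyl" where
  "weyl_Y = Poly_Mapping.single (0, 1) 1"

definition weyl_comm :: "'a::comm_ring_1 weyl \<Rightarrow> 'a weyl \<Rightarrow> 'a weyl" where
  "weyl_comm p q = weyl_mult p q - weyl_mult q p"

definition weyl_endo :: "('a::comm_ring_1 weyl \<Rightarrow> 'a weyl) \<Rightarrow> bool" where
  "weyl_endo f \<longleftrightarrow>
     (\<forall>p q. f (p + q) = f p + f q) \<and>
     (\<forall>p q. f (weyl_mult p q) = weyl_mult (f p) (f q)) \<and>
     (\<forall>c p. f (weyl_mult (weyl_const c) p) = weyl_mult (weyl_const c) (f p)) \<and>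
     f (weyl_const 1) = weyl_const 1"

definition weyl_auto :: "('a::comm_ring_1 weyl \<Rightarrow> 'a weyl) \<Rightarrow> bool" where
  "weyl_auto f \<longleftrightarrow> weyl_endo f \<and> bij f"

inductive_set weyl_gen :: "'a::comm_ring_1 weyl \<Rightarrow> 'a weyl set" for a where
  const: "weyl_const c \<in> weyl_gen a"
| gen: "a \<in> weyl_gen a"
| add: "p \<in> weyl_gen a \<Longrightarrow> q \<in> weyl_gen a \<Longrightarrow> p + q \<in> weyl_gen a"
| mult: "p \<in> weyl_gen a \<Longrightarrow> q \<in> weyl_gen a \<Longrightarrow> weyl_mult p q \<in> weyl_gen a"

end

theory Submission imports Defs begin

lemma comm_one:
  fixes a b :: "'r::ring_1"
  assumes ba: "b * a = a * b + 1"
  shows "b * a ^ k = a ^ k * b + of_nat k * a ^ (k - 1)"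
proof (induction k)
  case 0 then show ?case by simp
next
  case (Suc k)
  have "b * a ^ Suc k = (b * a ^ k) * a" by (simp only: power_Suc2 mult.assoc)
  also have "\<dots> = a ^ k * (b * a) + of_nat k * (a ^ (k - 1) * a)"
    using Suc by (simp add: algebra_simps)
  also have "a ^ (k - 1) * a = a ^ k" if "k > 0"
    using that by (cases k) (auto simp: power_commutes)
  then have "of_nat k * (a ^ (k - 1) * a) = of_nat k * a ^ k"
    by (cases "k = 0") auto
  moreover have "a ^ k * (a * b) = a * (a ^ k * b)" by (metis mult.assoc power_commutes)
  ultimately show ?case using ba by (simp add: algebra_simps power_Suc2)
qed

lemma nat_coef:
  "fact (Suc t) * (Suc j choose Suc t) * (k choose Suc t) =
   fact (Suc t) * (j choose Suc t) * (k choose Suc t) + fact t * (j choose t) * (k choose t) * (k - t)"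
proof -
  have 1: "Suc t * (k choose Suc t) = (k choose t) * (k - t)"
    by (metis binomial_absorption binomial_absorb_comp mult.commute)
  have 2: "fact (Suc t) = Suc t * fact t" by simp
  have "fact (Suc t) * (Suc j choose Suc t) * (k choose Suc t) =
     fact (Suc t) * (j choose Suc t) * (k choose Suc t) + fact t * (j choose t) * (Suc t * (k choose Suc t))"
    unfolding binomial_Suc_Suc 2 by (simp add: algebra_simps)
  also have "Suc t * (k choose Suc t) = (k choose t) * (k - t)" by (rule 1)
  finally show ?thesis by (simp add: mult.assoc)
qed

lemma of_nat_comm_left: "(b::'r::ring_1) * (of_nat n * x) = of_nat n * (b * x)"
  by (metis mult.assoc mult_of_nat_commute)

lemma comm_pow:
  fixes a b :: "'r::ring_1"
  assumes ba: "b * a = a * b + 1"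
  shows "b ^ j * a ^ k = (\<Sum>t\<le>j. of_nat (fact t * (j choose t) * (k choose t)) * a ^ (k - t) * b ^ (j - t))"
proof (induction j)
  case 0 then show ?case by simp
next
  case (Suc j)
  define N where "N j t = fact t * (j choose t) * (k choose t)" for j t
  have IH: "b ^ j * a ^ k = (\<Sum>t\<le>j. of_nat (N j t) * a ^ (k - t) * b ^ (j - t))"
    using Suc by (simp add: N_def)
  have "b ^ Suc j * a ^ k = b * (b ^ j * a ^ k)" by (simp add: mult.assoc)
  also have "\<dots> = (\<Sum>t\<le>j. of_nat (N j t) * ((b * a ^ (k - t)) * b ^ (j - t)))"
    unfolding IH sum_distrib_left
    by (rule sum.cong) (simp_all add: mult.assoc of_nat_comm_left[of b])
  also have "\<dots> = (\<Sum>t\<le>j. of_nat (N j t) * a ^ (k - t) * b ^ (Suc j - t))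
      + (\<Sum>t\<le>j. of_nat (N j t * (k - t)) * a ^ (k - Suc t) * b ^ (j - t))"
    unfolding sum.distrib[symmetric]
  proof (rule sum.cong)
    fix t assume "t \<in> {..j}"
    then have tj: "t \<le> j" by simp
    have "of_nat (N j t) * ((b * a ^ (k - t)) * b ^ (j - t)) =
      of_nat (N j t) * (a ^ (k - t) * (b * b ^ (j - t))) + of_nat (N j t) * (of_nat (k - t) * a ^ (k - t - 1) * b ^ (j - t))"
      by (simp only: comm_one[OF ba] distrib_left distrib_right mult.assoc)
    also have "b * b ^ (j - t) = b ^ (Suc j - t)" using tj by (simp add: Suc_diff_le)
    also have "k - t - 1 = k - Suc t" by simp
    finally show "of_nat (N j t) * ((b * a ^ (k - t)) * b ^ (j - t)) =
      of_nat (N j t) * a ^ (k - t) * b ^ (Suc j - t) + of_nat (N j t * (k - t)) * a ^ (k - Suc t) * b ^ (j - t)"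
      by (simp only: of_nat_mult mult.assoc)
  qed simp
  also have "\<dots> = (\<Sum>t\<le>Suc j. of_nat (N (Suc j) t) * a ^ (k - t) * b ^ (Suc j - t))"
  proof -
    have e1: "(\<Sum>t\<le>Suc j. of_nat (N j t) * a ^ (k - t) * b ^ (Suc j - t)) =
       (\<Sum>t\<le>j. of_nat (N j t) * a ^ (k - t) * b ^ (Suc j - t))"
      by (simp add: N_def binomial_eq_0)
    have e2: "(\<Sum>t\<le>Suc j. of_nat (if t = 0 then 0 else N j (t - 1) * (k - (t - 1))) * a ^ (k - t) * b ^ (Suc j - t) :: 'r) =
       (\<Sum>t\<le>j. of_nat (N j t * (k - t)) * a ^ (k - Suc t) * b ^ (j - t))"
      by (subst sum.atMost_Suc_shift) simp
    have e3: "N (Suc j) t = N j t + (if t = 0 then 0 else N j (t - 1) * (k - (t - 1)))" for t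
      by (cases t) (simp add: N_def, simp only: N_def nat_coef, simp)
    have "(\<Sum>t\<le>Suc j. of_nat (N (Suc j) t) * a ^ (k - t) * b ^ (Suc j - t)) =
      (\<Sum>t\<le>Suc j. of_nat (N j t) * a ^ (k - t) * b ^ (Suc j - t)) +
      (\<Sum>t\<le>Suc j. of_nat (if t = 0 then 0 else N j (t - 1) * (k - (t - 1))) * a ^ (k - t) * b ^ (Suc j - t) :: 'r)"
      by (simp only: e3 of_nat_add distrib_right sum.distrib)
    then show ?thesis by (simp only: e1 e2)
  qed
  finally show ?case by (simp add: N_def)
qed


locale wrep =
  fixes \<sigma> :: "'a::comm_ring_1 \<Rightarrow> 'r::ring_1" and a b :: 'r
  assumes \<sigma>_add: "\<sigma> (x + y) = \<sigma> x + \<sigma> y" and \<sigma>_mult: "\<sigma> (x * y) = \<sigma> x * \<sigma> y"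
    and \<sigma>_one: "\<sigma> 1 = 1" and \<sigma>_central: "\<sigma> x * r = r * \<sigma> x" and ba: "b * a = a * b + 1"
begin

lemma \<sigma>_zero: "\<sigma> 0 = 0" using \<sigma>_add[of 0 0] by simp

lemma \<sigma>_of_nat: "\<sigma> (of_nat n) = of_nat n"
  by (induction n) (simp_all add: \<sigma>_add \<sigma>_one \<sigma>_zero)

lemma \<sigma>_uminus: "\<sigma> (- x) = - \<sigma> x"
  using \<sigma>_add[of "-x" x] by (simp add: \<sigma>_zero eq_neg_iff_add_eq_0)

definition Phi :: "'a weyl \<Rightarrow> 'r" where
  "Phi p = (\<Sum>m\<in>Poly_Mapping.keys p. \<sigma> (Poly_Mapping.lookup p m) * a ^ fst m * b ^ snd m)"

lemma Phi_superset:
  assumes "finite S" "Poly_Mapping.keys p \<subseteq> S"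
  shows "Phi p = (\<Sum>m\<in>S. \<sigma> (Poly_Mapping.lookup p m) * a ^ fst m * b ^ snd m)"
  unfolding Phi_def using assms
  by (intro sum.mono_neutral_left) (auto simp: \<sigma>_zero in_keys_iff)

lemma Phi_add: "Phi (p + q) = Phi p + Phi q"
proof -
  let ?S = "Poly_Mapping.keys p \<union> Poly_Mapping.keys q"
  have "Phi (p + q) = (\<Sum>m\<in>?S. \<sigma> (Poly_Mapping.lookup (p + q) m) * a ^ fst m * b ^ snd m)"
    by (rule Phi_superset) (auto simp: keys_add)
  also have "\<dots> = (\<Sum>m\<in>?S. \<sigma> (Poly_Mapping.lookup p m) * a ^ fst m * b ^ snd m)
     + (\<Sum>m\<in>?S. \<sigma> (Poly_Mapping.lookup q m) * a ^ fst m * b ^ snd m)"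
    by (simp add: lookup_add \<sigma>_add distrib_right sum.distrib)
  also have "\<dots> = Phi p + Phi q"
    by (simp add: Phi_superset[symmetric])
  finally show ?thesis .
qed

lemma Phi_zero: "Phi 0 = 0" by (simp add: Phi_def)

lemma Phi_sum: "Phi (sum f S) = (\<Sum>s\<in>S. Phi (f s))"
  by (induction S rule: infinite_finite_induct) (simp_all add: Phi_add Phi_zero)

lemma Phi_single: "Phi (Poly_Mapping.single m v) = \<sigma> v * a ^ fst m * b ^ snd m"
  by (cases "v = 0") (simp_all add: Phi_def \<sigma>_zero)

lemma Phi_const: "Phi (weyl_const c) = \<sigma> c"
  by (simp add: weyl_const_def Phi_single)

lemma Phi_uminus: "Phi (- p) = - Phi p"
  using Phi_add[of "-p" p] by (simp add: Phi_zero eq_neg_iff_add_eq_0)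

lemma Phi_diff: "Phi (p - q) = Phi p - Phi q"
  using Phi_add[of p "-q"] by (simp add: Phi_uminus)

lemma mono_mult:
  "(\<Sum>t\<le>min j k. \<sigma> (x * y * of_nat (fact t * (j choose t) * (k choose t))) * a ^ (i + k - t) * b ^ (j + l - t))
   = (\<sigma> x * a ^ i * b ^ j) * (\<sigma> y * a ^ k * b ^ l)"
proof -
  define N where "N t = fact t * (j choose t) * (k choose t)" for t
  have "(\<sigma> x * a ^ i * b ^ j) * (\<sigma> y * a ^ k * b ^ l) = \<sigma> x * ((a ^ i * b ^ j) * \<sigma> y) * a ^ k * b ^ l"
    by (simp add: mult.assoc)
  also have "(a ^ i * b ^ j) * \<sigma> y = \<sigma> y * (a ^ i * b ^ j)" by (rule \<sigma>_central[symmetric])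
  also have "\<sigma> x * (\<sigma> y * (a ^ i * b ^ j)) * a ^ k * b ^ l = (\<sigma> x * \<sigma> y) * (a ^ i * (b ^ j * a ^ k) * b ^ l)"
    by (simp add: mult.assoc)
  also have "\<dots> = (\<Sum>t\<le>j. (\<sigma> x * \<sigma> y) * (a ^ i * (of_nat (N t) * a ^ (k - t) * b ^ (j - t)) * b ^ l))"
    by (simp add: comm_pow[OF ba] N_def sum_distrib_left sum_distrib_right)
  also have "\<dots> = (\<Sum>t\<le>j. \<sigma> (x * y * of_nat (N t)) * a ^ (i + k - t) * b ^ (j + l - t))"
  proof (rule sum.cong)
    fix t assume "t \<in> {..j}"
    show "(\<sigma> x * \<sigma> y) * (a ^ i * (of_nat (N t) * a ^ (k - t) * b ^ (j - t)) * b ^ l) =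
        \<sigma> (x * y * of_nat (N t)) * a ^ (i + k - t) * b ^ (j + l - t)"
    proof (cases "t \<le> k")
      case True
      have "a ^ i * (of_nat (N t) * a ^ (k - t) * b ^ (j - t)) * b ^ l
          = of_nat (N t) * ((a ^ i * a ^ (k - t)) * (b ^ (j - t) * b ^ l))"
        by (simp add: mult.assoc of_nat_comm_left)
      also have "a ^ i * a ^ (k - t) = a ^ (i + k - t)" using True by (simp add: power_add[symmetric])
      also have "b ^ (j - t) * b ^ l = b ^ (j + l - t)" using \<open>t \<in> {..j}\<close> by (simp add: power_add[symmetric])
      finally show ?thesis by (simp add: \<sigma>_mult \<sigma>_of_nat mult.assoc)
    next
      case False
      then have "N t = 0" by (simp add: N_def)
      then show ?thesis by (simp add: \<sigma>_zero)
    qed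
  qed simp
  also have "\<dots> = (\<Sum>t\<le>min j k. \<sigma> (x * y * of_nat (N t)) * a ^ (i + k - t) * b ^ (j + l - t))"
  proof (rule sum.mono_neutral_right)
    show "\<forall>t\<in>{..j} - {..min j k}. \<sigma> (x * y * of_nat (N t)) * a ^ (i + k - t) * b ^ (j + l - t) = 0"
    proof
      fix t assume "t \<in> {..j} - {..min j k}"
      then have "k < t" by auto
      then have "N t = 0" by (simp add: N_def)
      then show "\<sigma> (x * y * of_nat (N t)) * a ^ (i + k - t) * b ^ (j + l - t) = 0" by (simp add: \<sigma>_zero)
    qed
  qed auto
  finally show ?thesis by (simp add: N_def)
qed

lemma Phi_mult: "Phi (weyl_mult p q) = Phi p * Phi q"
proof -
  have "Phi (weyl_mult p q) = (\<Sum>m\<in>Poly_Mapping.keys p. \<Sum>n\<in>Poly_Mapping.keys q.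
      (\<sigma> (Poly_Mapping.lookup p m) * a ^ fst m * b ^ snd m) * (\<sigma> (Poly_Mapping.lookup q n) * a ^ fst n * b ^ snd n))"
    unfolding weyl_mult_def Phi_sum Phi_single fst_conv snd_conv mono_mult by (rule refl)
  also have "\<dots> = Phi p * Phi q" by (simp add: Phi_def sum_product)
  finally show ?thesis .
qed

end

lemma nz_Suc: "(x::'a::comm_ring_1) * of_nat b \<noteq> 0 \<Longrightarrow> b = Suc (b - Suc 0)"
  by (cases b) auto

lemma sum_when_unique:
  assumes "finite S" "\<And>n. n \<in> S \<Longrightarrow> P n \<longleftrightarrow> n = z"
  shows "(\<Sum>n\<in>S. (f n when P n)) = (f z when z \<in> S)"
proof -
  have "(\<Sum>n\<in>S. (f n when P n)) = (\<Sum>n\<in>S. if n = z then f n else 0)"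
    by (rule sum.cong) (auto simp: when_def assms(2))
  then show ?thesis by (simp add: when_def sum.delta[OF assms(1)])
qed

lemma when_keys: "(Poly_Mapping.lookup q n when n \<in> Poly_Mapping.keys q) = Poly_Mapping.lookup q n"
  by (simp add: when_def in_keys_iff)

lemma lookup_sum_single:
  "Poly_Mapping.lookup (\<Sum>n\<in>S. Poly_Mapping.single (g n) (h n)) x = (\<Sum>n\<in>S. (h n when g n = x))"
  by (simp add: lookup_sum lookup_single)

lemma sum_min1: "(\<Sum>t\<le>min (Suc 0) m. f t) = f 0 + (if m = 0 then 0 else f (Suc 0))"
  by (cases m) (simp_all add: atMost_Suc add.commute)

lemma sum_min1': "(\<Sum>t\<le>min m (Suc 0). f t) = f 0 + (if m = 0 then 0 else f (Suc 0))"
  by (cases m) (simp_all add: atMost_Suc add.commute)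

definition smul :: "'a::comm_ring_1 \<Rightarrow> 'a weyl \<Rightarrow> 'a weyl" where
  "smul c p = weyl_mult (weyl_const c) p"

lemma smul_expand: "smul c p = (\<Sum>n\<in>Poly_Mapping.keys p. Poly_Mapping.single n (c * Poly_Mapping.lookup p n))"
  by (cases "c = 0") (simp_all add: smul_def weyl_mult_def weyl_const_def)

lemma lookup_smul: "Poly_Mapping.lookup (smul c p) n = c * Poly_Mapping.lookup p n"
  unfolding smul_expand lookup_sum_single
  by (subst sum_when_unique[where z = n]) (auto simp: when_def in_keys_iff)

lemma LX_expand: "weyl_mult weyl_X q = (\<Sum>n\<in>Poly_Mapping.keys q. Poly_Mapping.single (Suc (fst n), snd n) (Poly_Mapping.lookup q n))"
  by (simp add: weyl_mult_def weyl_X_def)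

lemma lookup_LX: "Poly_Mapping.lookup (weyl_mult weyl_X q) (k, l) = (if k = 0 then 0 else Poly_Mapping.lookup q (k - 1, l))"
proof (cases k)
  case 0 then show ?thesis unfolding LX_expand lookup_sum_single by (simp add: when_def)
next
  case (Suc k')
  then show ?thesis unfolding LX_expand lookup_sum_single
    by (subst sum_when_unique[where z = "(k', l)"]) (auto simp: when_keys)
qed

lemma LY_expand: "weyl_mult weyl_Y q = (\<Sum>n\<in>Poly_Mapping.keys q. Poly_Mapping.single (fst n, Suc (snd n)) (Poly_Mapping.lookup q n))
   + (\<Sum>n\<in>Poly_Mapping.keys q. Poly_Mapping.single (fst n - 1, snd n) (Poly_Mapping.lookup q n * of_nat (fst n)))"
  apply (simp add: weyl_mult_def weyl_Y_def sum_min1 sum.distrib)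
  by (rule sum.cong) auto

lemma lookup_LY: "Poly_Mapping.lookup (weyl_mult weyl_Y q) (k, l) =
   (if l = 0 then 0 else Poly_Mapping.lookup q (k, l - 1)) + of_nat (Suc k) * Poly_Mapping.lookup q (Suc k, l)"
proof -
  have 1: "(\<Sum>n\<in>Poly_Mapping.keys q. (Poly_Mapping.lookup q n when (fst n, Suc (snd n)) = (k, l)))
     = (if l = 0 then 0 else Poly_Mapping.lookup q (k, l - 1))"
  proof (cases l)
    case 0 then show ?thesis by (simp add: when_def)
  next
    case (Suc l')
    then show ?thesis
      by (subst sum_when_unique[where z = "(k, l')"]) (auto simp: when_keys)
  qed
  have 2: "(\<Sum>n\<in>Poly_Mapping.keys q. (Poly_Mapping.lookup q n * of_nat (fst n) when (fst n - 1, snd n) = (k, l)))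
     = (\<Sum>n\<in>Poly_Mapping.keys q. ((Poly_Mapping.lookup q n * of_nat (fst n)) when n = (Suc k, l)))"
    by (rule sum.cong) (auto simp: when_def intro: nz_Suc)
  also have "\<dots> = of_nat (Suc k) * Poly_Mapping.lookup q (Suc k, l)"
    by (subst sum_when_unique[where z = "(Suc k, l)"]) (auto simp: when_def in_keys_iff mult.commute)
  finally show ?thesis unfolding LY_expand lookup_add lookup_sum_single 1 by simp
qed

lemma RX_expand: "weyl_mult q weyl_X = (\<Sum>n\<in>Poly_Mapping.keys q. Poly_Mapping.single (Suc (fst n), snd n) (Poly_Mapping.lookup q n))
   + (\<Sum>n\<in>Poly_Mapping.keys q. Poly_Mapping.single (fst n, snd n - 1) (Poly_Mapping.lookup q n * of_nat (snd n)))"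
  apply (simp add: weyl_mult_def weyl_X_def sum_min1' sum.distrib)
  by (rule sum.cong) auto

lemma lookup_RX: "Poly_Mapping.lookup (weyl_mult q weyl_X) (k, l) =
   (if k = 0 then 0 else Poly_Mapping.lookup q (k - 1, l)) + of_nat (Suc l) * Poly_Mapping.lookup q (k, Suc l)"
proof -
  have 1: "(\<Sum>n\<in>Poly_Mapping.keys q. (Poly_Mapping.lookup q n when (Suc (fst n), snd n) = (k, l)))
     = (if k = 0 then 0 else Poly_Mapping.lookup q (k - 1, l))"
  proof (cases k)
    case 0 then show ?thesis by (simp add: when_def)
  next
    case (Suc k')
    then show ?thesis
      by (subst sum_when_unique[where z = "(k', l)"]) (auto simp: when_keys)
  qed
  have 2: "(\<Sum>n\<in>Poly_Mapping.keys q. (Poly_Mapping.lookup q n * of_nat (snd n) when (fst n, snd n - 1) = (k, l)))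
     = (\<Sum>n\<in>Poly_Mapping.keys q. ((Poly_Mapping.lookup q n * of_nat (snd n)) when n = (k, Suc l)))"
    by (rule sum.cong) (auto simp: when_def intro: nz_Suc)
  also have "\<dots> = of_nat (Suc l) * Poly_Mapping.lookup q (k, Suc l)"
    by (subst sum_when_unique[where z = "(k, Suc l)"]) (auto simp: when_def in_keys_iff mult.commute)
  finally show ?thesis unfolding RX_expand lookup_add lookup_sum_single 1 by simp
qed


lemma smul_add: "smul c (p + q) = smul c p + smul c q"
  by (rule poly_mapping_eqI) (simp add: lookup_smul lookup_add algebra_simps)
lemma smul_uminus: "smul c (- p) = - smul c p"
  by (rule poly_mapping_eqI) (simp add: lookup_smul)
lemma smul_diff: "smul c (p - q) = smul c p - smul c q"
  by (rule poly_mapping_eqI) (simp add: lookup_smul lookup_minus algebra_simps)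
lemma smul_zero: "smul c 0 = 0"
  by (rule poly_mapping_eqI) (simp add: lookup_smul)
lemma smul_smul: "smul c (smul d p) = smul (c * d) p"
  by (rule poly_mapping_eqI) (simp add: lookup_smul)
lemma smul_one: "smul 1 p = p"
  by (rule poly_mapping_eqI) (simp add: lookup_smul)
lemma smul_add_left: "smul (c + d) p = smul c p + smul d p"
  by (rule poly_mapping_eqI) (simp add: lookup_smul lookup_add algebra_simps)

typedef (overloaded) ('a::comm_ring_1) lend =
  "{f :: 'a weyl \<Rightarrow> 'a weyl. (\<forall>p q. f (p + q) = f p + f q) \<and> (\<forall>c p. f (smul c p) = smul c (f p))}"
  morphisms Rep_lend Abs_lend
  by (rule exI[of _ id]) auto

setup_lifting type_definition_lend

instantiation lend :: (comm_ring_1) ring_1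
begin
lift_definition zero_lend :: "'a lend" is "\<lambda>_. 0" by (simp add: smul_zero)
lift_definition one_lend :: "'a lend" is "id" by simp
lift_definition plus_lend :: "'a lend \<Rightarrow> 'a lend \<Rightarrow> 'a lend" is "\<lambda>f g x. f x + g x"
  by (simp add: smul_add algebra_simps)
lift_definition uminus_lend :: "'a lend \<Rightarrow> 'a lend" is "\<lambda>f x. - f x"
  by (simp add: smul_uminus algebra_simps)
lift_definition minus_lend :: "'a lend \<Rightarrow> 'a lend \<Rightarrow> 'a lend" is "\<lambda>f g x. f x - g x"
  by (simp add: smul_diff algebra_simps)
lift_definition times_lend :: "'a lend \<Rightarrow> 'a lend \<Rightarrow> 'a lend" is "\<lambda>f g x. f (g x)"
  by simp
instance
proof
  fix x y z :: "'a lend"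
  show "x * y * z = x * (y * z)" by transfer auto
  show "x + y + z = x + (y + z)" by transfer (auto simp: algebra_simps)
  show "x + y = y + x" by transfer (auto simp: algebra_simps)
  show "0 + x = x" by transfer auto
  show "- x + x = 0" by transfer auto
  show "x - y = x + - y" by transfer auto
  show "1 * x = x" by transfer auto
  show "x * 1 = x" by transfer auto
  show "(x + y) * z = x * z + y * z" by transfer auto
  show "x * (y + z) = x * y + x * z" by transfer auto
next
  show "(0::'a lend) \<noteq> 1"
  proof transfer
    have "(weyl_const 1 :: 'a weyl) \<noteq> 0"
      by (metis lookup_single_eq lookup_zero weyl_const_def zero_neq_one)
    then show "(\<lambda>_. 0::'a weyl) \<noteq> id" by (metis id_apply)
  qed
qed
end

lemma Rep_times: "Rep_lend (f * g) x = Rep_lend f (Rep_lend g x)"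
  by (simp add: times_lend.rep_eq)
lemma Rep_plus: "Rep_lend (f + g) x = Rep_lend f x + Rep_lend g x"
  by (simp add: plus_lend.rep_eq)
lemma Rep_one: "Rep_lend 1 x = x"
  by (simp add: one_lend.rep_eq)
lemma Rep_zero: "Rep_lend 0 x = 0"
  by (simp add: zero_lend.rep_eq)
lemma Rep_power: "Rep_lend (f ^ n) x = (Rep_lend f ^^ n) x"
  by (induction n arbitrary: x) (simp_all add: Rep_one Rep_times)
lemma Rep_sum: "Rep_lend (sum f S) x = (\<Sum>s\<in>S. Rep_lend (f s) x)"
  by (induction S rule: infinite_finite_induct) (simp_all add: Rep_zero Rep_plus)
lemma Rep_add_arg: "Rep_lend f (p + q) = Rep_lend f p + Rep_lend f q"
  using Rep_lend[of f] by auto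
lemma Rep_smul_arg: "Rep_lend f (smul c p) = smul c (Rep_lend f p)"
  using Rep_lend[of f] by auto

lift_definition sc :: "'a::comm_ring_1 \<Rightarrow> 'a lend" is smul
  by (simp add: smul_add smul_smul mult.commute)
lift_definition LX :: "'a::comm_ring_1 lend" is "weyl_mult weyl_X"
proof (intro conjI allI)
  fix p q :: "'a weyl" and c
  show "weyl_mult weyl_X (p + q) = weyl_mult weyl_X p + weyl_mult weyl_X q"
    by (rule poly_mapping_eqI) (auto simp: lookup_LX lookup_add)
  show "weyl_mult weyl_X (smul c p) = smul c (weyl_mult weyl_X p)"
    by (rule poly_mapping_eqI) (auto simp: lookup_LX lookup_smul)
qed
lift_definition LY :: "'a::comm_ring_1 lend" is "weyl_mult weyl_Y"
proof (intro conjI allI)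
  fix p q :: "'a weyl" and c
  show "weyl_mult weyl_Y (p + q) = weyl_mult weyl_Y p + weyl_mult weyl_Y q"
    by (rule poly_mapping_eqI) (auto simp: lookup_LY lookup_add algebra_simps)
  show "weyl_mult weyl_Y (smul c p) = smul c (weyl_mult weyl_Y p)"
    by (rule poly_mapping_eqI) (auto simp: lookup_LY lookup_smul algebra_simps)
qed

lemma LY_LX: "LY * LX = LX * LY + (1 :: 'a::comm_ring_1 lend)"
proof (transfer, rule ext, rule poly_mapping_eqI)
  fix q :: "'a weyl" and n :: "nat \<times> nat"
  obtain k l where n: "n = (k, l)" by fastforce
  show "Poly_Mapping.lookup (weyl_mult weyl_Y (weyl_mult weyl_X q)) n =
        Poly_Mapping.lookup (weyl_mult weyl_X (weyl_mult weyl_Y q) + id q) n"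
    unfolding n by (cases k) (auto simp: lookup_LX lookup_LY lookup_add algebra_simps)
qed

interpretation R: wrep sc LX LY
proof
  fix x y :: 'a and r :: "'a lend"
  show "sc (x + y) = sc x + sc y"
    by transfer (simp add: smul_add_left fun_eq_iff)
  show "sc (x * y) = sc x * sc y"
    by transfer (simp add: smul_smul fun_eq_iff)
  show "sc 1 = (1 :: 'a lend)"
    by transfer (simp add: smul_one fun_eq_iff)
  show "sc x * r = r * sc x"
    by transfer auto
  show "LY * LX = LX * LY + (1 :: 'a lend)" by (rule LY_LX)
qed


abbreviation rho :: "'a::comm_ring_1 weyl \<Rightarrow> 'a lend" where "rho \<equiv> wrep.Phi sc LX LY"

lemma LY_pow_one: "(Rep_lend LY ^^ j) (weyl_const 1) = Poly_Mapping.single (0, j) (1::'a::comm_ring_1)"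
proof (induction j)
  case 0 then show ?case by (simp add: weyl_const_def)
next
  case (Suc j)
  have st: "weyl_mult weyl_Y (Poly_Mapping.single (0, j) 1) = Poly_Mapping.single (0, Suc j) (1::'a)"
  proof (rule poly_mapping_eqI)
    fix n :: "nat \<times> nat"
    obtain k l where n: "n = (k, l)" by fastforce
    show "Poly_Mapping.lookup (weyl_mult weyl_Y (Poly_Mapping.single (0, j) 1)) n =
      Poly_Mapping.lookup (Poly_Mapping.single (0, Suc j) (1::'a)) n"
      unfolding n by (auto simp: lookup_LY lookup_single when_def)
  qed
  show ?case using Suc by (simp add: LY.rep_eq st)
qed

lemma LX_pow: "(Rep_lend LX ^^ i) (Poly_Mapping.single (0, j) c) = Poly_Mapping.single (i, j) (c::'a::comm_ring_1)"
proof (induction i)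
  case 0 then show ?case by simp
next
  case (Suc i)
  have st: "weyl_mult weyl_X (Poly_Mapping.single (i, j) c) = Poly_Mapping.single (Suc i, j) c"
  proof (rule poly_mapping_eqI)
    fix n :: "nat \<times> nat"
    obtain k l where n: "n = (k, l)" by fastforce
    show "Poly_Mapping.lookup (weyl_mult weyl_X (Poly_Mapping.single (i, j) c)) n =
      Poly_Mapping.lookup (Poly_Mapping.single (Suc i, j) c) n"
      unfolding n by (auto simp: lookup_LX lookup_single when_def)
  qed
  show ?case using Suc by (simp add: LX.rep_eq st)
qed

lemma smul_single: "smul c (Poly_Mapping.single m 1) = Poly_Mapping.single m c"
  by (rule poly_mapping_eqI) (simp add: lookup_smul lookup_single when_def)

lemma sum_monomials: "(\<Sum>m\<in>Poly_Mapping.keys p. Poly_Mapping.single m (Poly_Mapping.lookup p m)) = p"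
  by (rule poly_mapping_eqI, unfold lookup_sum_single, subst sum_when_unique) (auto simp: when_keys)

lemma rho_one: "Rep_lend (rho p) (weyl_const 1) = (p :: 'a::comm_ring_1 weyl)"
proof -
  have "Rep_lend (rho p) (weyl_const 1) =
     (\<Sum>m\<in>Poly_Mapping.keys p. Poly_Mapping.single m (Poly_Mapping.lookup p m))"
    unfolding R.Phi_def Rep_sum
    by (rule sum.cong) (auto simp: Rep_times Rep_power sc.rep_eq LY_pow_one LX_pow smul_single)
  then show ?thesis by (simp add: sum_monomials)
qed

lemma rho_inj: "inj (rho :: 'a::comm_ring_1 weyl \<Rightarrow> _)"
  by (metis injI rho_one)

lemma rho_app: "Rep_lend (rho r) s = weyl_mult r (s :: 'a::comm_ring_1 weyl)"
proof -
  have "Rep_lend (rho r) s = Rep_lend (rho r) (Rep_lend (rho s) (weyl_const 1))" by (simp add: rho_one)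
  also have "\<dots> = Rep_lend (rho (weyl_mult r s)) (weyl_const 1)" by (simp add: R.Phi_mult Rep_times)
  finally show ?thesis by (simp add: rho_one)
qed

lemma rg_mult: fixes x y :: "'a::comm_ring_1 lend" shows "x \<in> range rho \<Longrightarrow> y \<in> range rho \<Longrightarrow> x * y \<in> range rho"
  by (auto simp: R.Phi_mult[symmetric])
lemma rg_add: fixes x y :: "'a::comm_ring_1 lend" shows "x \<in> range rho \<Longrightarrow> y \<in> range rho \<Longrightarrow> x + y \<in> range rho"
  by (auto simp: R.Phi_add[symmetric])
lemma rg_one: "(1::'a::comm_ring_1 lend) \<in> range rho"
  by (metis R.Phi_const R.\<sigma>_one rangeI)
lemma rg_zero: "(0::'a::comm_ring_1 lend) \<in> range rho"
  by (metis R.Phi_zero rangeI)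
lemma rg_sc: "sc (c::'a::comm_ring_1) \<in> range rho"
  by (metis R.Phi_const rangeI)
lemma rg_pow: fixes x :: "'a::comm_ring_1 lend" shows "x \<in> range rho \<Longrightarrow> x ^ n \<in> range rho"
  by (induction n) (simp_all add: rg_one rg_mult)
lemma rg_sum: "\<forall>s\<in>S. g s \<in> range (rho :: 'a::comm_ring_1 weyl \<Rightarrow> _) \<Longrightarrow> sum g S \<in> range rho"
  by (induction S rule: infinite_finite_induct) (simp_all add: rg_zero rg_add)

lemma gen_zero: "0 \<in> weyl_gen A"
  by (metis weyl_gen.const single_zero weyl_const_def)
lemma gen_sum: "\<forall>s\<in>S. g s \<in> weyl_gen A \<Longrightarrow> sum g S \<in> weyl_gen A"
  by (induction S rule: infinite_finite_induct) (simp_all add: gen_zero weyl_gen.add)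

lemma centralizer_X:
  fixes u :: "'a::{idom, ring_char_0} weyl"
  assumes "weyl_comm weyl_X u = 0"
  shows "Poly_Mapping.lookup u (k, Suc l) = 0"
proof -
  have "Poly_Mapping.lookup (weyl_comm weyl_X u) (k, l) = 0" using assms by simp
  then have "of_nat (Suc l) * Poly_Mapping.lookup u (k, Suc l) = 0"
    by (simp add: weyl_comm_def lookup_minus lookup_LX lookup_RX)
  then show ?thesis by (simp del: of_nat_Suc)
qed


theorem theorem4p8:
  fixes A B w :: "'a::{idom, ring_char_0} weyl"
  assumes "\<forall>f :: 'a weyl \<Rightarrow> 'a weyl. weyl_endo f \<longrightarrow> weyl_auto f"
    and "\<exists>c. c dvd (1::'a) \<and> weyl_comm A B = weyl_const c"
    and "weyl_comm A w = 0"
  shows "w \<in> weyl_gen A"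
proof -
  obtain c where c1: "c dvd (1::'a)" and cAB: "weyl_comm A B = weyl_const c" using assms(2) by blast
  obtain d where cd: "1 = c * d" using c1 by (auto elim: dvdE)
  define a where "a = rho A"
  define b where "b = sc (- d) * rho B"
  have rAB: "rho A * rho B - rho B * rho A = sc c"
    using arg_cong[OF cAB, of rho] by (simp add: weyl_comm_def R.Phi_diff R.Phi_mult R.Phi_const)
  have ab: "a * b = sc (- d) * (rho A * rho B)"
    unfolding a_def b_def by (metis mult.assoc R.\<sigma>_central)
  have ba0: "b * a = sc (- d) * (rho B * rho A)"
    unfolding a_def b_def by (simp add: mult.assoc)
  have "b * a - a * b = sc (- d) * (rho B * rho A - rho A * rho B)"
    unfolding ab ba0 by (simp add: right_diff_distrib)
  also have "rho B * rho A - rho A * rho B = - sc c" using rAB by (simp add: algebra_simps)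
  also have "sc (- d) * - sc c = sc (d * c)"
    by (simp add: R.\<sigma>_mult[symmetric] R.\<sigma>_uminus)
  also have "d * c = 1" using cd by (simp add: mult.commute)
  finally have ba: "b * a = a * b + 1" by (simp add: R.\<sigma>_one algebra_simps)
  interpret P: wrep sc a b
  proof unfold_locales
    fix x y :: 'a and r :: "'a lend"
    show "sc (x + y) = sc x + sc y" by (rule R.\<sigma>_add)
    show "sc (x * y) = sc x * sc y" by (rule R.\<sigma>_mult)
    show "sc 1 = (1 :: 'a lend)" by (rule R.\<sigma>_one)
    show "sc x * r = r * sc x" by (rule R.\<sigma>_central)
    show "b * a = a * b + 1" by (rule ba)
  qed
  have a_rg: "a \<in> range rho" by (simp add: a_def)
  have b_rg: "b \<in> range rho" unfolding b_def by (intro rg_mult rg_sc) simp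
  have Prg: "P.Phi p \<in> range rho" for p
    unfolding P.Phi_def
    by (intro rg_sum ballI rg_mult rg_pow rg_sc a_rg b_rg)
  define F where "F p = Rep_lend (P.Phi p) (weyl_const 1)" for p
  have rhoF: "rho (F p) = P.Phi p" for p
  proof -
    obtain r where r: "P.Phi p = rho r" using Prg[of p] by blast
    show ?thesis unfolding F_def r rho_one ..
  qed
  have F_mult: "F (weyl_mult p q) = weyl_mult (F p) (F q)" for p q
    unfolding F_def P.Phi_mult Rep_times
    by (metis F_def rhoF rho_app)
  have F_add: "F (p + q) = F p + F q" for p q
    unfolding F_def P.Phi_add Rep_plus ..
  have F_diff: "F (p - q) = F p - F q" for p q
    unfolding F_def P.Phi_diff by (simp add: minus_lend.rep_eq)
  have F_const: "F (weyl_const e) = weyl_const e" for e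
    unfolding F_def P.Phi_const sc.rep_eq by (simp add: weyl_const_def smul_single)
  have endo: "weyl_endo F"
    unfolding weyl_endo_def by (simp add: F_add F_mult F_const)
  then have "bij F" using assms(1) by (simp add: weyl_auto_def)
  then obtain u where u: "w = F u" by (metis bij_pointE)
  have FX: "F weyl_X = A"
    unfolding F_def weyl_X_def P.Phi_single by (simp add: R.\<sigma>_one a_def rho_one)
  have "F (weyl_comm weyl_X u) = weyl_comm A w"
    by (simp add: weyl_comm_def F_diff F_mult FX u)
  also have "\<dots> = F 0" using assms(3) F_const[of 0] by (simp add: weyl_const_def)
  finally have "weyl_comm weyl_X u = 0" using \<open>bij F\<close> by (meson bij_def injD)
  then have u0: "Poly_Mapping.lookup u (k, Suc l) = 0" for k l by (rule centralizer_X)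
  have keys0: "snd m = 0" if "m \<in> Poly_Mapping.keys u" for m
  proof (rule ccontr)
    assume "snd m \<noteq> 0"
    then obtain l where "m = (fst m, Suc l)" by (metis not0_implies_Suc prod.collapse)
    then have "Poly_Mapping.lookup u m = 0" using u0 by metis
    then show False using that by (simp add: in_keys_iff)
  qed
  have powgen: "(Rep_lend a ^^ i) (weyl_const 1) \<in> weyl_gen A" for i
    by (induction i) (simp_all add: weyl_gen.const a_def rho_app weyl_gen.mult weyl_gen.gen)
  have "w = (\<Sum>m\<in>Poly_Mapping.keys u. smul (Poly_Mapping.lookup u m) ((Rep_lend a ^^ fst m) (weyl_const 1)))"
    unfolding u F_def P.Phi_def Rep_sum
    by (rule sum.cong) (auto simp: Rep_times Rep_power sc.rep_eq keys0)
  also have "\<dots> \<in> weyl_gen A"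
    by (intro gen_sum ballI) (simp add: smul_def weyl_gen.mult weyl_gen.const powgen)
  finally show ?thesis .
qed

end
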